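(* Let $E$ be a finite directed graph satisfying Condition (EXC) and having no sources and no sinks. Then $\mathrm{h}_{\mathrm{alg}}(KE)=0$.
   Context: For a finite directed graph $E=(E^0,E^1,s,r)$: a sink is a vertex $v$ with $s^{-1}(v)=\emptyset$, a source a vertex with $r^{-1}(v)=\emptyset$. A cycle is a path $e_1\cdots e_n$ ($n\ge1$) with $s(e_1)=r(e_n)$ and $s(e_i)\neq s(e_j)$ for $i\neq j$. $E$ satisfies Condition (EXC) if every cycle is exclusive, i.e.\ no vertex of a cycle $C$ lies on a cycle other than a rotation of $C$. The path algebra $KE$ has basis all paths with concatenation product; standard filtration $V_n=$ span of paths of length $\le n$; $\mathrm{h}_{\mathrm{alg}}(KE)=0$ if $KE$ is finite-dimensional and $\limsup_n\frac1n\log\dim(V_n/V_{n-1})$ otherwise. *)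

theory Defs
  imports "Graph_Theory.Digraph" "HOL-Library.Liminf_Limsup" "HOL-Library.Extended_Real"
begin

text \<open>Directed graphs E = (E0, E1, s, r) are rendered as Graph_Theory pre_digraphs:
  E0 = verts G, E1 = arcs G, s = tail G, r = head G.\<close>

definition is_epath :: "('a,'b) pre_digraph \<Rightarrow> 'b list \<Rightarrow> bool" where
  "is_epath G es \<longleftrightarrow> es \<noteq> [] \<and> set es \<subseteq> arcs G \<and>
     (\<forall>i. Suc i < length es \<longrightarrow> head G (es ! i) = tail G (es ! Suc i))"

definition is_sink :: "('a,'b) pre_digraph \<Rightarrow> 'a \<Rightarrow> bool" where
  "is_sink G v \<longleftrightarrow> v \<in> verts G \<and> {e \<in> arcs G. tail G e = v} = {}"

definition is_source :: "('a,'b) pre_digraph \<Rightarrow> 'a \<Rightarrow> bool" where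
  "is_source G v \<longleftrightarrow> v \<in> verts G \<and> {e \<in> arcs G. head G e = v} = {}"

definition is_cycle :: "('a,'b) pre_digraph \<Rightarrow> 'b list \<Rightarrow> bool" where
  "is_cycle G c \<longleftrightarrow> is_epath G c \<and> tail G (hd c) = head G (last c) \<and>
     distinct (map (tail G) c)"

definition cycle_verts :: "('a,'b) pre_digraph \<Rightarrow> 'b list \<Rightarrow> 'a set" where
  "cycle_verts G c = set (map (tail G) c)"

definition exclusive_cycle :: "('a,'b) pre_digraph \<Rightarrow> 'b list \<Rightarrow> bool" where
  "exclusive_cycle G c \<longleftrightarrow> (\<forall>d. is_cycle G d \<and> cycle_verts G c \<inter> cycle_verts G d \<noteq> {}
       \<longrightarrow> (\<exists>k. d = rotate k c))"

definition condition_EXC :: "('a,'b) pre_digraph \<Rightarrow> bool" where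
  "condition_EXC G \<longleftrightarrow> (\<forall>c. is_cycle G c \<longrightarrow> exclusive_cycle G c)"

text \<open>Since paths form a basis of KE and V_n is spanned by
  paths of length <= n, dim (V_n / V_(n-1)) = card (paths_of_length G n).\<close>
definition paths_of_length :: "('a,'b) pre_digraph \<Rightarrow> nat \<Rightarrow> ('a + 'b list) set" where
  "paths_of_length G n =
     (if n = 0 then Inl ` verts G else Inr ` {es. length es = n \<and> is_epath G es})"

definition all_paths :: "('a,'b) pre_digraph \<Rightarrow> ('a + 'b list) set" where
  "all_paths G = (\<Union>n. paths_of_length G n)"

definition h_alg :: "('a,'b) pre_digraph \<Rightarrow> ereal" where
  "h_alg G = (if finite (all_paths G) then 0
     else limsup (\<lambda>n. ereal (ln (real (card (paths_of_length G n))) / real n)))"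

end

theory Submission
  imports Defs "HOL-Library.FuncSet" "HOL-Real_Asymp.Real_Asymp"
begin

lemma epath_succ:
  "is_epath G es \<longleftrightarrow> es \<noteq> [] \<and> set es \<subseteq> arcs G \<and>
     successively (\<lambda>e f. head G e = tail G f) es"
  unfolding is_epath_def successively_conv_nth by blast

lemma epath_take:
  assumes "is_epath G es" "0 < k"
  shows "is_epath G (take k es)"
proof -
  have "successively (\<lambda>e f. head G e = tail G f) (take k es @ drop k es)"
    using assms by (simp add: epath_succ)
  then have "successively (\<lambda>e f. head G e = tail G f) (take k es)"
    unfolding successively_append_iff by blast
  then show ?thesis using assms
    by (auto simp: epath_succ dest: in_set_takeD)
qed

lemma epath_drop:
  assumes "is_epath G es" "k < length es"
  shows "is_epath G (drop k es)"
proof -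
  have "successively (\<lambda>e f. head G e = tail G f) (take k es @ drop k es)"
    using assms by (simp add: epath_succ)
  then have "successively (\<lambda>e f. head G e = tail G f) (drop k es)"
    unfolding successively_append_iff by blast
  then show ?thesis using assms
    by (auto simp: epath_succ dest: in_set_dropD)
qed

lemma epath_append:
  assumes "is_epath G xs" "is_epath G ys" "head G (last xs) = tail G (hd ys)"
  shows "is_epath G (xs @ ys)"
  using assms by (auto simp: epath_succ successively_append_iff)

lemma epath_step: "is_epath G es \<Longrightarrow> Suc i < length es \<Longrightarrow> head G (es ! i) = tail G (es ! Suc i)"
  unfolding is_epath_def by blast

lemma epath_step': "is_epath G es \<Longrightarrow> 0 < j \<Longrightarrow> j < length es \<Longrightarrow> head G (es ! (j - 1)) = tail G (es ! j)"
  using epath_step[of G es "j - 1"] by simp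

definition CE :: "('a,'b) pre_digraph \<Rightarrow> 'b set" where
  "CE G = {e. \<exists>c. is_cycle G c \<and> e \<in> set c}"

lemma closed_walk_cycle:
  "is_epath G es \<Longrightarrow> tail G (hd es) = head G (last es) \<Longrightarrow> hd es \<in> CE G"
proof (induction "length es" arbitrary: es rule: less_induct)
  case less
  show ?case
  proof (cases "distinct (map (tail G) es)")
    case True
    then have "is_cycle G es" using less.prems by (simp add: is_cycle_def)
    moreover have "hd es \<in> set es" using less.prems by (simp add: is_epath_def)
    ultimately show ?thesis unfolding CE_def by blast
  next
    case False
    then obtain i j where ij: "i < j" "j < length es" "tail G (es ! i) = tail G (es ! j)"
    proof -
      obtain a b where ab: "a < length es" "b < length es" "a \<noteq> b" "tail G (es ! a) = tail G (es ! b)"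
        using False by (auto simp: distinct_conv_nth)
      show ?thesis
      proof (cases "a < b")
        case True then show ?thesis using ab that by blast
      next
        case False then have "b < a" using ab by simp
        then show ?thesis using ab that by simp
      qed
    qed
    have ne: "es \<noteq> []" using less.prems by (simp add: is_epath_def)
    show ?thesis
    proof (cases "i = 0")
      case True
      let ?es = "take j es"
      have j0: "0 < j" using ij by simp
      have p: "is_epath G ?es" using epath_take[OF less.prems(1) j0] .
      have h: "hd ?es = hd es" using j0 ne by (simp add: hd_take)
      have l: "last ?es = es ! (j - 1)" using j0 ij by (subst last_conv_nth) auto
      have "head G (es ! (j - 1)) = tail G (es ! j)"
        using epath_step'[OF less.prems(1) j0 ij(2)] .
      then have "tail G (hd ?es) = head G (last ?es)"
        using h l ij True ne by (simp add: hd_conv_nth)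
      moreover have "length ?es < length es" using ij by simp
      ultimately show ?thesis using less.hyps[OF _ p] h by simp
    next
      case False
      let ?es = "take i es @ drop j es"
      have p1: "is_epath G (take i es)" using epath_take[OF less.prems(1)] False by simp
      have p2: "is_epath G (drop j es)" using epath_drop[OF less.prems(1) ij(2)] .
      have "head G (es ! (i - 1)) = tail G (es ! i)"
        using epath_step'[OF less.prems(1), of i] ij False by simp
      moreover have "last (take i es) = es ! (i - 1)" using False ij
        by (subst last_conv_nth) auto
      moreover have "hd (drop j es) = es ! j" using ij by (simp add: hd_drop_conv_nth)
      ultimately have p: "is_epath G ?es" using epath_append[OF p1 p2] ij by simp
      have h: "hd ?es = hd es" using False ne by simp
      have l: "last ?es = last es" using ij by simp
      have "length ?es < length es" using ij False by simp
      then show ?thesis using less.hyps[OF _ p] h l less.prems(2) by simp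
    qed
  qed
qed

lemma repeat_CE:
  assumes "is_epath G es" "i < j" "j < length es" "tail G (es ! i) = tail G (es ! j)"
  shows "es ! i \<in> CE G"
proof -
  let ?s = "take (j - i) (drop i es)"
  have p: "is_epath G ?s" using epath_take[OF epath_drop[of G es i]] assms by simp
  have h: "hd ?s = es ! i" using assms by (simp add: hd_take hd_drop_conv_nth)
  have l: "last ?s = es ! (j - 1)" using assms
    by (simp add: last_conv_nth)
  have "head G (es ! (j - 1)) = tail G (es ! j)"
    using epath_step'[OF assms(1), of j] assms by simp
  then show ?thesis using closed_walk_cycle[OF p] h l assms(4) by simp
qed

lemma CE_unique:
  assumes exc: "condition_EXC G" and e: "e \<in> CE G" and f: "f \<in> CE G"
    and t: "tail G e = tail G f"
  shows "e = f"
proof -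
  obtain c where c: "is_cycle G c" "e \<in> set c" using e unfolding CE_def by blast
  obtain d where d: "is_cycle G d" "f \<in> set d" using f unfolding CE_def by blast
  have "tail G e \<in> cycle_verts G c \<inter> cycle_verts G d"
    using c d t unfolding cycle_verts_def by (metis IntI image_eqI set_map)
  then obtain k where "d = rotate k c"
    using exc c d unfolding condition_EXC_def exclusive_cycle_def by blast
  then have "f \<in> set c" using d by simp
  moreover have "inj_on (tail G) (set c)" using c(1) unfolding is_cycle_def
    by (simp add: distinct_map)
  ultimately show ?thesis using c t by (meson inj_onD)
qed

definition Pset :: "('a,'b) pre_digraph \<Rightarrow> 'b list \<Rightarrow> 'a \<Rightarrow> nat set" where
  "Pset G es u = {i. i < length es \<and> tail G (es ! i) = u \<and> es ! i \<notin> CE G}"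

lemma Pset_single:
  assumes "is_epath G es" "i < length es" "es ! i \<notin> CE G"
  shows "Pset G es (tail G (es ! i)) = {i}"
proof -
  have "j = i" if "j < length es" "tail G (es ! j) = tail G (es ! i)" "es ! j \<notin> CE G" for j
  proof (rule ccontr)
    assume "j \<noteq> i"
    then consider "j < i" | "i < j" by linarith
    then show False
    proof cases
      case 1 then show False using repeat_CE[OF assms(1) 1 assms(2)] that by simp
    next
      case 2 then show False using repeat_CE[OF assms(1) 2 that(1)] that assms by simp
    qed
  qed
  then show ?thesis using assms unfolding Pset_def by auto
qed

definition genc :: "('a,'b) pre_digraph \<Rightarrow> 'b list \<Rightarrow> 'a \<Rightarrow> (nat \<times> 'b) option" where
  "genc G es u = (if u \<in> verts G then
      (if Pset G es u = {} then None else Some (Min (Pset G es u), es ! Min (Pset G es u)))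
     else undefined)"

definition enc :: "('a,'b) pre_digraph \<Rightarrow> 'b list \<Rightarrow> 'a \<times> ('a \<Rightarrow> (nat \<times> 'b) option)" where
  "enc G es = (tail G (hd es), genc G es)"

lemma genc_single:
  assumes "is_epath G es" "i < length es" "es ! i \<notin> CE G" "tail G (es ! i) \<in> verts G"
  shows "genc G es (tail G (es ! i)) = Some (i, es ! i)"
  using Pset_single[OF assms(1-3)] assms(4) unfolding genc_def by simp

lemma genc_some:
  assumes "genc G es u = Some (i, e)" "u \<in> verts G"
  shows "i < length es \<and> es ! i = e \<and> tail G e = u \<and> e \<notin> CE G"
proof -
  have ne: "Pset G es u \<noteq> {}" and eq: "Min (Pset G es u) = i" "es ! Min (Pset G es u) = e"
    using assms unfolding genc_def by (auto split: if_splits)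
  have fin: "finite (Pset G es u)" unfolding Pset_def by simp
  have "Min (Pset G es u) \<in> Pset G es u" using Min_in[OF fin ne] .
  then show ?thesis using eq unfolding Pset_def by auto
qed

lemma enc_inj:
  assumes wf: "wf_digraph G" and exc: "condition_EXC G"
    and p: "is_epath G es" and p': "is_epath G es'"
    and len: "length es = length es'" and eq: "enc G es = enc G es'"
  shows "es = es'"
proof -
  have hd: "tail G (hd es) = tail G (hd es')" and g: "genc G es = genc G es'"
    using eq unfolding enc_def by auto
  have ne: "es \<noteq> []" "es' \<noteq> []" using p p' unfolding is_epath_def by auto
  have arcs: "\<And>i. i < length es \<Longrightarrow> es ! i \<in> arcs G" "\<And>i. i < length es' \<Longrightarrow> es' ! i \<in> arcs G"
    using p p' unfolding is_epath_def by auto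
  have main: "\<And>u. es ! i \<notin> CE G \<Longrightarrow> i < length es \<Longrightarrow> tail G (es ! i) = tail G (es' ! i)
      \<Longrightarrow> es' ! i = es ! i"
    if A: "is_epath G es" "is_epath G es'" "length es = length es'" "genc G es = genc G es'"
       "\<And>i. i < length es \<Longrightarrow> es ! i \<in> arcs G" for es es' :: "'b list" and i
  proof -
    fix u assume c: "es ! i \<notin> CE G" "i < length es" "tail G (es ! i) = tail G (es' ! i)"
    have v: "tail G (es ! i) \<in> verts G" using A(5)[OF c(2)] wf by (simp add: wf_digraph.tail_in_verts)
    have "genc G es' (tail G (es ! i)) = Some (i, es ! i)"
      using genc_single[OF A(1) c(2) c(1) v] A(4) by simp
    then show "es' ! i = es ! i" using genc_some[OF _ v] by blast
  qed
  have "\<forall>i. i < length es \<longrightarrow> es ! i = es' ! i"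
  proof (intro allI)
    fix i show "i < length es \<longrightarrow> es ! i = es' ! i"
    proof (induction i)
      case 0
      have t: "tail G (es ! 0) = tail G (es' ! 0)" using hd ne by (simp add: hd_conv_nth)
      show ?case
      proof
        assume i: "0 < length es"
        show "es ! 0 = es' ! 0"
        proof (cases "es ! 0 \<in> CE G")
          case False then show ?thesis using main[OF p p' len g arcs(1) False i t] by simp
        next
          case True
          show ?thesis
          proof (cases "es' ! 0 \<in> CE G")
            case False then show ?thesis
              using main[OF p' p len[symmetric] g[symmetric] arcs(2) False] i len t by simp
          next
            case True2: True
            show ?thesis using CE_unique[OF exc True True2 t] .
          qed
        qed
      qed
    next
      case (Suc k)
      show ?case
      proof
        assume i: "Suc k < length es"
        have "es ! k = es' ! k" using Suc i by simp
        then have t: "tail G (es ! Suc k) = tail G (es' ! Suc k)"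
          using epath_step[OF p i] epath_step[OF p'] i len by simp
        show "es ! Suc k = es' ! Suc k"
        proof (cases "es ! Suc k \<in> CE G")
          case False then show ?thesis using main[OF p p' len g arcs(1) False i t] by simp
        next
          case True
          show ?thesis
          proof (cases "es' ! Suc k \<in> CE G")
            case False then show ?thesis
              using main[OF p' p len[symmetric] g[symmetric] arcs(2) False] i len t by simp
          next
            case True2: True
            show ?thesis using CE_unique[OF exc True True2 t] .
          qed
        qed
      qed
    qed
  qed
  then show ?thesis using len by (simp add: nth_equalityI)
qed

lemma count_paths:
  assumes fg: "fin_digraph G" and exc: "condition_EXC G"
  shows "card {es. length es = n \<and> is_epath G es}
           \<le> card (verts G) * (n * card (arcs G) + 1) ^ card (verts G)"
proof -
  have wf: "wf_digraph G" using fg by (simp add: fin_digraph_def)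
  have fv: "finite (verts G)" and fa: "finite (arcs G)"
    using fg by (auto simp: fin_digraph_def fin_digraph_axioms_def)
  let ?T = "\<lambda>_::'a. insert None (Some ` ({0..<n} \<times> arcs G))"
  let ?B = "verts G \<times> PiE (verts G) ?T"
  let ?A = "{es. length es = n \<and> is_epath G es}"
  have inj: "inj_on (enc G) ?A"
    by (rule inj_onI) (use enc_inj[OF wf exc] in auto)
  have sub: "enc G ` ?A \<subseteq> ?B"
  proof
    fix x assume "x \<in> enc G ` ?A"
    then obtain es where es: "length es = n" "is_epath G es" and x: "x = enc G es" by blast
    have ar: "\<And>i. i < length es \<Longrightarrow> es ! i \<in> arcs G" using es(2) unfolding is_epath_def by auto
    have ne: "es \<noteq> []" using es(2) unfolding is_epath_def by auto
    have "tail G (hd es) \<in> verts G" using ar[of 0] ne wf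
      by (simp add: hd_conv_nth wf_digraph.tail_in_verts)
    moreover have "genc G es \<in> PiE (verts G) ?T"
    proof (rule PiE_I)
      fix u assume u: "u \<in> verts G"
      show "genc G es u \<in> ?T u"
      proof (cases "genc G es u")
        case None then show ?thesis by simp
      next
        case (Some p)
        obtain i e where p: "p = (i, e)" by fastforce
        have "i < length es \<and> es ! i = e" using genc_some[of G es u i e] Some p u by simp
        then show ?thesis using Some p es(1) ar by auto
      qed
    next
      fix u assume "u \<notin> verts G" then show "genc G es u = undefined" by (simp add: genc_def)
    qed
    ultimately show "x \<in> ?B" using x by (simp add: enc_def)
  qed
  have finB: "finite ?B" using fv fa by (simp add: finite_PiE)
  have "card ?A \<le> card ?B" using card_inj_on_le[OF inj sub finB] .
  also have "card ?B = card (verts G) * (n * card (arcs G) + 1) ^ card (verts G)"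
  proof -
    have "card (?T u) = n * card (arcs G) + 1" for u
    proof -
      have "card (Some ` ({0..<n} \<times> arcs G)) = n * card (arcs G)"
        by (simp add: card_image card_cartesian_product)
      moreover have "finite (Some ` ({0..<n} \<times> arcs G))" using fa by simp
      ultimately show ?thesis by simp
    qed
    then show ?thesis using fv by (simp add: card_cartesian_product card_PiE)
  qed
  finally show ?thesis .
qed

theorem lemma5p12:
  fixes G :: "('a,'b) pre_digraph"
  assumes "fin_digraph G"
    and "condition_EXC G"
    and "\<forall>v \<in> verts G. \<not> is_source G v"
    and "\<forall>v \<in> verts G. \<not> is_sink G v"
  shows "h_alg G = 0"
proof -
  define V where "V = card (verts G)"
  define E where "E = card (arcs G)"
  define C :: real where "C = real V * (real E + 1) ^ V + 1"
  have C1: "C \<ge> 1" unfolding C_def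
    by (simp add: mult_nonneg_nonneg)
  then have Cpos: "C > 0" by simp
  let ?f = "\<lambda>n. ln (real (card (paths_of_length G n))) / real n"
  have bound: "real (card (paths_of_length G n)) \<le> C * (real n + 1) ^ V" if n: "n > 0" for n
  proof -
    have "card (paths_of_length G n) = card {es. length es = n \<and> is_epath G es}"
      using n by (simp add: paths_of_length_def card_image)
    also have "\<dots> \<le> V * (n * E + 1) ^ V" unfolding V_def E_def
      using count_paths[OF assms(1,2)] .
    finally have "real (card (paths_of_length G n)) \<le> real (V * (n * E + 1) ^ V)"
      by (simp only: of_nat_le_iff)
    also have "\<dots> = real V * (real n * real E + 1) ^ V" by (simp add: add.commute)
    also have "\<dots> \<le> real V * ((real E + 1) * (real n + 1)) ^ V"
      by (intro mult_left_mono power_mono) (auto simp: algebra_simps)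
    also have "\<dots> = (real V * (real E + 1) ^ V) * (real n + 1) ^ V"
      by (simp add: power_mult_distrib)
    also have "\<dots> \<le> C * (real n + 1) ^ V" unfolding C_def
      by (simp add: distrib_right)
    finally show ?thesis .
  qed
  have lim_up: "(\<lambda>n::nat. ln (C * (real n + 1) ^ V) / real n) \<longlonglongrightarrow> 0"
    using Cpos by real_asymp
  have lo: "0 \<le> ?f n" for n
  proof -
    have "0 \<le> ln (real (card (paths_of_length G n)))"
      by (cases "card (paths_of_length G n) = 0") auto
    then show ?thesis by simp
  qed
  have up: "?f n \<le> ln (C * (real n + 1) ^ V) / real n" if n: "n > 0" for n
  proof -
    have "ln (real (card (paths_of_length G n))) \<le> ln (C * (real n + 1) ^ V)"
    proof (cases "card (paths_of_length G n) = 0")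
      case True
      have "1 \<le> C * (real n + 1) ^ V" using C1 mult_mono[OF C1 one_le_power[of "real n + 1" V]] by simp
      then show ?thesis using True by simp
    next
      case False then show ?thesis using bound[OF n] by (subst ln_le_cancel_iff) auto
    qed
    then show ?thesis using n by (simp add: divide_right_mono)
  qed
  have "?f \<longlonglongrightarrow> 0"
  proof (rule tendsto_sandwich[OF _ _ tendsto_const lim_up])
    show "\<forall>\<^sub>F n in sequentially. 0 \<le> ?f n" using lo by simp
    show "\<forall>\<^sub>F n in sequentially. ?f n \<le> ln (C * (real n + 1) ^ V) / real n"
      using up by (intro eventually_sequentiallyI[of 1]) simp
  qed
  then have lim: "(\<lambda>n. ereal (?f n)) \<longlonglongrightarrow> ereal 0" by (rule tendsto_ereal)
  have "limsup (\<lambda>n. ereal (?f n)) = ereal 0"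
  proof -
    have nt: "\<not> trivial_limit (sequentially :: nat filter)" by simp
    show ?thesis by (rule lim_imp_Limsup[OF nt lim])
  qed
  then have "limsup (\<lambda>n. ereal (?f n)) = 0" by (simp add: zero_ereal_def)
  then show ?thesis unfolding h_alg_def by simp
qed

end
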